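(* Let $K\subseteq\mathbb R^2$ be a compact set containing no array on three points. For each $l\in\mathbb N$ and each $\alpha>0$ there exists $n_0\in\mathbb N$ such that for all $n\ge n_0$ the following holds: if $u_0u_1\ldots u_k$ is a path in the graph $\Gamma^n$ such that $|p(u_0)-p(u_1)|\ge\alpha$ and $|q(u_{k-1})-q(u_k)|\ge\alpha$, then $k>l$.
   Context: An array on three points is a triple $a_1,a_2,a_3$ of points in the plane with $a_1\ne a_2$, $a_2\ne a_3$, such that the segments $[a_1;a_2]$ and $[a_2;a_3]$ are each parallel to a coordinate axis and are mutually orthogonal. Let $p,q:\mathbb R^2\to\mathbb R$ be $p(x,y)=x$, $q(x,y)=y$. For $n\in\mathbb N$ the graph $\Gamma^n$ is defined as follows: its vertex set $V(\Gamma^n)$ consists of all lattice points $(i/2^n,j/2^n)$, $i,j\in\mathbb Z$, such that the square $[i/2^n;(i+1)/2^n)\times[j/2^n;(j+1)/2^n)$ meets $K$; its edges are all two-element sets $\{u_1,u_2\}$ of vertices with $|p(u_1)-p(u_2)|\le 1/2^n$ or $|q(u_1)-q(u_2)|\le 1/2^n$. A path of length $k$ is a sequence $u_0,u_1,\dots,u_k$ of pairwise distinct vertices such that each two consecutive ones form an edge. *)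

theory Defs
  imports "HOL-Analysis.Analysis"
begin

definition p :: "real \<times> real \<Rightarrow> real" where "p z = fst z"
definition q :: "real \<times> real \<Rightarrow> real" where "q z = snd z"

definition array3 :: "real \<times> real \<Rightarrow> real \<times> real \<Rightarrow> real \<times> real \<Rightarrow> bool" where
  "array3 a1 a2 a3 \<longleftrightarrow> a1 \<noteq> a2 \<and> a2 \<noteq> a3 \<and>
     ((p a1 = p a2 \<and> q a2 = q a3) \<or> (q a1 = q a2 \<and> p a2 = p a3))"

definition Gamma_V :: "(real \<times> real) set \<Rightarrow> nat \<Rightarrow> (real \<times> real) set" where
  "Gamma_V K n = {(of_int i / 2^n, of_int j / 2^n) | i j :: int.
      ({of_int i / 2^n ..< (of_int i + 1) / 2^n} \<times> {of_int j / 2^n ..< (of_int j + 1) / 2^n}) \<inter> K \<noteq> {}}"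

definition Gamma_E :: "(real \<times> real) set \<Rightarrow> nat \<Rightarrow> real \<times> real \<Rightarrow> real \<times> real \<Rightarrow> bool" where
  "Gamma_E K n u1 u2 \<longleftrightarrow> u1 \<in> Gamma_V K n \<and> u2 \<in> Gamma_V K n \<and> u1 \<noteq> u2 \<and>
     (\<bar>p u1 - p u2\<bar> \<le> 1 / 2^n \<or> \<bar>q u1 - q u2\<bar> \<le> 1 / 2^n)"

definition Gamma_path :: "(real \<times> real) set \<Rightarrow> nat \<Rightarrow> (nat \<Rightarrow> real \<times> real) \<Rightarrow> nat \<Rightarrow> bool" where
  "Gamma_path K n u k \<longleftrightarrow> (\<forall>i\<le>k. u i \<in> Gamma_V K n) \<and> inj_on u {0..k} \<and>
     (\<forall>i<k. Gamma_E K n (u i) (u (Suc i)))"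

end

theory Submission
  imports Defs
begin

lemma comb:
  "\<lbrakk>\<forall>i<k. p (w i) = p (w (Suc i)) \<or> q (w i) = q (w (Suc i)); 1 \<le> k;
    q (w 0) = q (w 1); p (w 0) \<noteq> p (w 1); p (w (k-1)) = p (w k); q (w (k-1)) \<noteq> q (w k)\<rbrakk>
   \<Longrightarrow> \<exists>a b c. a \<in> w ` {..k} \<and> b \<in> w ` {..k} \<and> c \<in> w ` {..k} \<and> array3 a b c"
proof (induction k arbitrary: w)
  case 0
  then show ?case by simp
next
  case (Suc k)
  show ?case
  proof (cases "k = 0")
    case True
    then show ?thesis using Suc.prems by simp
  next
    case k: False
    show ?thesis
    proof (cases "w 1 = w 2")
      case eq: True
      define w' where "w' = (\<lambda>i. if i = 0 then w 0 else w (Suc i))"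
      have a: "\<forall>i<k. p (w' i) = p (w' (Suc i)) \<or> q (w' i) = q (w' (Suc i))"
      proof (intro allI impI)
        fix i assume "i < k"
        show "p (w' i) = p (w' (Suc i)) \<or> q (w' i) = q (w' (Suc i))"
        proof (cases "i = 0")
          case True
          then show ?thesis using Suc.prems eq by (simp add: w'_def numeral_2_eq_2)
        next
          case False
          then show ?thesis using Suc.prems(1) \<open>i < k\<close> by (simp add: w'_def)
        qed
      qed
      have k1: "k \<noteq> 1"
      proof
        assume "k = 1"
        then show False using Suc.prems eq by (simp add: numeral_2_eq_2)
      qed
      have "\<exists>a b c. a \<in> w' ` {..k} \<and> b \<in> w' ` {..k} \<and> c \<in> w' ` {..k} \<and> array3 a b c"
      proof (rule Suc.IH[OF a])
        show "1 \<le> k" using k by simp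
        show "q (w' 0) = q (w' 1)" using Suc.prems(3) eq by (simp add: w'_def numeral_2_eq_2)
        show "p (w' 0) \<noteq> p (w' 1)" using Suc.prems(4) eq by (simp add: w'_def numeral_2_eq_2)
        have "k - 1 \<noteq> 0" using k k1 by simp
        then have "w' (k-1) = w k" "w' k = w (Suc k)" using k by (auto simp: w'_def)
        then show "p (w' (k-1)) = p (w' k)" "q (w' (k-1)) \<noteq> q (w' k)" using Suc.prems(5,6) by auto
      qed
      moreover have "w' ` {..k} \<subseteq> w ` {..Suc k}"
      proof
        fix x assume "x \<in> w' ` {..k}"
        then obtain i where i: "i \<le> k" "x = w' i" by blast
        show "x \<in> w ` {..Suc k}"
        proof (cases "i = 0")
          case True then show ?thesis using i by (simp add: w'_def)
        next
          case False then have "x = w (Suc i)" "Suc i \<le> Suc k" using i by (simp_all add: w'_def)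
          then show ?thesis by blast
        qed
      qed
      ultimately show ?thesis by (meson subsetD)
    next
      case ne: False
      show ?thesis
      proof (cases "p (w 1) = p (w 2)")
        case True
        have "array3 (w 0) (w 1) (w 2)"
          using Suc.prems(3,4) ne True unfolding array3_def by auto
        moreover have "w 0 \<in> w ` {..Suc k}" "w 1 \<in> w ` {..Suc k}" "w 2 \<in> w ` {..Suc k}"
          using k by auto
        ultimately show ?thesis by (meson subsetD)
      next
        case False
        have "1 < Suc k" using k by simp
        then have "p (w 1) = p (w (Suc 1)) \<or> q (w 1) = q (w (Suc 1))" using Suc.prems(1) by blast
        then have q12: "q (w 1) = q (w 2)" using False by (simp add: numeral_2_eq_2)
        have "\<exists>a b c. a \<in> (w \<circ> Suc) ` {..k} \<and> b \<in> (w \<circ> Suc) ` {..k} \<and> c \<in> (w \<circ> Suc) ` {..k} \<and> array3 a b c"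
        proof (rule Suc.IH)
          show "\<forall>i<k. p ((w \<circ> Suc) i) = p ((w \<circ> Suc) (Suc i)) \<or> q ((w \<circ> Suc) i) = q ((w \<circ> Suc) (Suc i))"
            using Suc.prems(1) by simp
          show "1 \<le> k" using k by simp
          show "q ((w \<circ> Suc) 0) = q ((w \<circ> Suc) 1)" using q12 by (simp add: numeral_2_eq_2)
          show "p ((w \<circ> Suc) 0) \<noteq> p ((w \<circ> Suc) 1)" using False by (simp add: numeral_2_eq_2)
          have "Suc (k-1) = k" using k by simp
          then show "p ((w \<circ> Suc) (k-1)) = p ((w \<circ> Suc) k)" "q ((w \<circ> Suc) (k-1)) \<noteq> q ((w \<circ> Suc) k)"
            using Suc.prems(5,6) by auto
        qed
        moreover have "(w \<circ> Suc) ` {..k} \<subseteq> w ` {..Suc k}"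
        proof
          fix x assume "x \<in> (w \<circ> Suc) ` {..k}"
          then obtain i where i: "i \<le> k" "x = w (Suc i)" by auto
          then have "Suc i \<in> {..Suc k}" by simp
          then show "x \<in> w ` {..Suc k}" using i(2) by blast
        qed
        ultimately show ?thesis by (meson subsetD)
      qed
    qed
  qed
qed


lemma vertex_near:
  assumes "v \<in> Gamma_V K n"
  shows "\<exists>c\<in>K. \<bar>p c - p v\<bar> \<le> 1/2^n \<and> \<bar>q c - q v\<bar> \<le> 1/2^n"
proof -
  obtain i j :: int where v: "v = (of_int i / 2^n, of_int j / 2^n)" and
    ne: "({of_int i / 2^n ..< (of_int i + 1) / 2^n} \<times> {of_int j / 2^n ..< (of_int j + 1) / 2^n}) \<inter> K \<noteq> {}"
    using assms unfolding Gamma_V_def by blast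
  then obtain c where c: "c \<in> K" "c \<in> {of_int i / 2^n ..< (of_int i + 1) / 2^n} \<times> {of_int j / 2^n ..< (of_int j + 1) / 2^n}"
    by (meson IntE ex_in_conv)
  have e: "(of_int i + 1) / 2^n = of_int i / 2^n + 1/(2::real)^n" for i :: int
    by (simp add: add_divide_distrib)
  have c1: "of_int i / 2^n \<le> fst c" "fst c < of_int i / 2^n + 1/2^n"
    using c(2) e[of i] by (auto simp: mem_Times_iff)
  have c2: "of_int j / 2^n \<le> snd c" "snd c < of_int j / 2^n + 1/2^n"
    using c(2) e[of j] by (auto simp: mem_Times_iff)
  show ?thesis unfolding p_def q_def v using c(1) c1 c2 by (intro bexI[of _ c]) auto
qed


lemma subseq_lemma:
  fixes f :: "nat \<Rightarrow> nat \<Rightarrow> real \<times> real"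
  assumes "compact K" "\<forall>n. \<forall>i\<le>m. f n i \<in> K"
  shows "\<exists>r w. strict_mono r \<and> (\<forall>i\<le>m. w i \<in> K \<and> (\<lambda>n. f (r n) i) \<longlonglongrightarrow> w i)"
  using assms(2)
proof (induction m)
  case 0
  have "\<forall>n. f n 0 \<in> K" using 0 by simp
  then obtain l r where "l \<in> K" "strict_mono r" "((\<lambda>n. f n 0) \<circ> r) \<longlonglongrightarrow> l"
    using assms(1) unfolding compact_eq_seq_compact_metric seq_compact_def by meson
  then show ?case by (intro exI[of _ r] exI[of _ "\<lambda>_. l"]) (auto simp: o_def)
next
  case (Suc m)
  then obtain r w where r: "strict_mono r" "\<forall>i\<le>m. w i \<in> K \<and> (\<lambda>n. f (r n) i) \<longlonglongrightarrow> w i"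
    by auto
  have "\<forall>n. f (r n) (Suc m) \<in> K" using Suc.prems by simp
  then obtain l r2 where l: "l \<in> K" "strict_mono r2" "((\<lambda>n. f (r n) (Suc m)) \<circ> r2) \<longlonglongrightarrow> l"
    using assms(1) unfolding compact_eq_seq_compact_metric seq_compact_def by meson
  show ?case
  proof (intro exI[of _ "r \<circ> r2"] exI[of _ "w(Suc m := l)"] conjI allI impI)
    show "strict_mono (r \<circ> r2)" using r l strict_mono_o by blast
    fix i assume "i \<le> Suc m"
    show "(w(Suc m := l)) i \<in> K" using \<open>i \<le> Suc m\<close> r l by (auto simp: le_Suc_eq)
    show "(\<lambda>n. f ((r \<circ> r2) n) i) \<longlonglongrightarrow> (w(Suc m := l)) i"
    proof (cases "i = Suc m")
      case True then show ?thesis using l by (simp add: o_def)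
    next
      case False
      then have "i \<le> m" using \<open>i \<le> Suc m\<close> by simp
      then have "(\<lambda>n. f (r n) i) \<longlonglongrightarrow> w i" using r by blast
      from LIMSEQ_subseq_LIMSEQ[OF this l(2)] show ?thesis using False by (simp add: o_def)
    qed
  qed
qed


theorem mainTheorem2:
  fixes K :: "(real \<times> real) set"
  assumes "compact K"
    and "\<not> (\<exists>a1 a2 a3. a1 \<in> K \<and> a2 \<in> K \<and> a3 \<in> K \<and> array3 a1 a2 a3)"
  shows "\<forall>(l::nat) (\<alpha>::real). \<alpha> > 0 \<longrightarrow> (\<exists>n0::nat. \<forall>n\<ge>n0. \<forall>u k.
           Gamma_path K n u k \<and> 1 \<le> k \<and> \<bar>p (u 0) - p (u 1)\<bar> \<ge> \<alpha> \<and> \<bar>q (u (k - 1)) - q (u k)\<bar> \<ge> \<alpha>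
           \<longrightarrow> k > l)"
proof (intro allI impI)
  fix l :: nat and \<alpha> :: real
  assume \<alpha>: "\<alpha> > 0"
  define P where "P n u k \<longleftrightarrow> Gamma_path K n u k \<and> 1 \<le> k \<and> \<bar>p (u 0) - p (u 1)\<bar> \<ge> \<alpha> \<and> \<bar>q (u (k - 1)) - q (u k)\<bar> \<ge> \<alpha>"
    for n u k
  show "\<exists>n0::nat. \<forall>n\<ge>n0. \<forall>u k.
           Gamma_path K n u k \<and> 1 \<le> k \<and> \<bar>p (u 0) - p (u 1)\<bar> \<ge> \<alpha> \<and> \<bar>q (u (k - 1)) - q (u k)\<bar> \<ge> \<alpha>
           \<longrightarrow> k > l"
  proof (rule ccontr)
    assume "\<not> ?thesis"
    then have H: "\<forall>n0. \<exists>n\<ge>n0. \<exists>u k. P n u k \<and> k \<le> l"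
      unfolding P_def by (simp add: not_less)
    define B where "B = {n. \<exists>u k. P n u k \<and> k \<le> l}"
    have infB: "infinite B" using H unfolding B_def infinite_nat_iff_unbounded_le by auto
    have "B = (\<Union>k\<in>{..l}. {n. \<exists>u. P n u k})" by (auto simp: B_def)
    then have "\<exists>k\<in>{..l}. infinite {n. \<exists>u. P n u k}" using infB by auto
    then obtain k where k: "k \<le> l" "infinite {n. \<exists>u. P n u k}" by auto
    define N where "N = {n. \<exists>u. P n u k}"
    define r0 where "r0 = enumerate N"
    have r0: "strict_mono r0" "\<And>m. r0 m \<in> N"
      using k(2) unfolding r0_def N_def by (simp add: strict_mono_enumerate, rule enumerate_in_set)
    define U where "U m = (SOME u. P (r0 m) u k)" for m
    have PU: "P (r0 m) (U m) k" for m
      using r0(2)[of m] unfolding N_def U_def by (metis (mono_tags) mem_Collect_eq someI_ex)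
    have k1: "1 \<le> k" using PU[of 0] unfolding P_def by simp
    define C where "C m i = (SOME c. c \<in> K \<and> \<bar>p c - p (U m i)\<bar> \<le> 1/2^(r0 m) \<and> \<bar>q c - q (U m i)\<bar> \<le> 1/2^(r0 m))" for m i
    have CK: "C m i \<in> K \<and> \<bar>p (C m i) - p (U m i)\<bar> \<le> 1/2^(r0 m) \<and> \<bar>q (C m i) - q (U m i)\<bar> \<le> 1/2^(r0 m)"
      if "i \<le> k" for m i
    proof -
      have "U m i \<in> Gamma_V K (r0 m)" using PU[of m] that unfolding P_def Gamma_path_def by blast
      from vertex_near[OF this] show ?thesis unfolding C_def by (rule someI2_bex) auto
    qed
    have "\<forall>n. \<forall>i\<le>k. C n i \<in> K" using CK by blast
    from subseq_lemma[OF assms(1) this] obtain r w where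
      rw: "strict_mono r" "\<And>i. i \<le> k \<Longrightarrow> w i \<in> K" "\<And>i. i \<le> k \<Longrightarrow> (\<lambda>n. C (r n) i) \<longlonglongrightarrow> w i"
      by blast
    define e where "e n = 1/(2::real)^(r0 (r n))" for n
    have e0: "e \<longlonglongrightarrow> 0"
    proof (rule Lim_null_comparison)
      have "strict_mono (r0 \<circ> r)" using r0(1) rw(1) strict_mono_o by blast
      then have "n \<le> r0 (r n)" for n using seq_suble[of "r0 \<circ> r" n] by simp
      then have "(2::real)^n \<le> 2^(r0 (r n))" for n by (simp add: power_increasing)
      then have "norm (e n) \<le> (1/2)^n" for n unfolding e_def by (simp add: power_one_over frac_le)
      then show "\<forall>\<^sub>F n in sequentially. norm (e n) \<le> (1/2::real)^n" by simp
      show "(\<lambda>n. (1/2::real)^n) \<longlonglongrightarrow> 0" by (rule LIMSEQ_realpow_zero) auto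
    qed
    have pl: "(\<lambda>n. p (C (r n) i)) \<longlonglongrightarrow> p (w i)" "(\<lambda>n. q (C (r n) i)) \<longlonglongrightarrow> q (w i)" if "i \<le> k" for i
      using rw(3)[OF that] unfolding p_def q_def by (auto intro: tendsto_fst tendsto_snd)
    have A: "p (w i) = p (w (Suc i)) \<or> q (w i) = q (w (Suc i))" if "i < k" for i
    proof -
      let ?g = "\<lambda>n. min \<bar>p (C (r n) i) - p (C (r n) (Suc i))\<bar> \<bar>q (C (r n) i) - q (C (r n) (Suc i))\<bar>"
      have L1: "?g \<longlonglongrightarrow> min \<bar>p (w i) - p (w (Suc i))\<bar> \<bar>q (w i) - q (w (Suc i))\<bar>"
        using that by (intro tendsto_intros pl) auto
      have L2: "(\<lambda>n. 3 * e n) \<longlonglongrightarrow> 3 * 0" by (intro tendsto_intros e0)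
      have L3: "?g n \<le> 3 * e n" for n
      proof -
        have E: "Gamma_E K (r0 (r n)) (U (r n) i) (U (r n) (Suc i))"
          using PU[of "r n"] that unfolding P_def Gamma_path_def by blast
        have c1: "\<bar>p (C (r n) i) - p (U (r n) i)\<bar> \<le> e n" "\<bar>q (C (r n) i) - q (U (r n) i)\<bar> \<le> e n"
          using CK[of i "r n"] that unfolding e_def by auto
        have c2: "\<bar>p (C (r n) (Suc i)) - p (U (r n) (Suc i))\<bar> \<le> e n" "\<bar>q (C (r n) (Suc i)) - q (U (r n) (Suc i))\<bar> \<le> e n"
          using CK[of "Suc i" "r n"] that unfolding e_def by auto
        have "\<bar>p (U (r n) i) - p (U (r n) (Suc i))\<bar> \<le> e n \<or> \<bar>q (U (r n) i) - q (U (r n) (Suc i))\<bar> \<le> e n"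
          using E unfolding Gamma_E_def e_def by blast
        then show ?thesis using c1 c2 by (smt (verit))
      qed
      have "min \<bar>p (w i) - p (w (Suc i))\<bar> \<bar>q (w i) - q (w (Suc i))\<bar> \<le> 3 * 0"
      proof (rule LIMSEQ_le[OF L1 L2])
        show "\<exists>N. \<forall>n\<ge>N. ?g n \<le> 3 * e n" using L3 by blast
      qed
      then show ?thesis by (smt (verit))
    qed
    have B1: "\<alpha> \<le> \<bar>p (w 0) - p (w 1)\<bar>"
    proof -
      have L1: "(\<lambda>n. \<alpha> - 2 * e n) \<longlonglongrightarrow> \<alpha> - 2 * 0" by (intro tendsto_intros e0)
      have L2: "(\<lambda>n. \<bar>p (C (r n) 0) - p (C (r n) 1)\<bar>) \<longlonglongrightarrow> \<bar>p (w 0) - p (w 1)\<bar>"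
        using k1 by (intro tendsto_intros pl) auto
      have L3: "\<alpha> - 2 * e n \<le> \<bar>p (C (r n) 0) - p (C (r n) 1)\<bar>" for n
      proof -
        have c1: "\<bar>p (C (r n) 0) - p (U (r n) 0)\<bar> \<le> e n" "\<bar>p (C (r n) 1) - p (U (r n) 1)\<bar> \<le> e n"
          using CK[of 0 "r n"] CK[of 1 "r n"] k1 unfolding e_def by auto
        have "\<alpha> \<le> \<bar>p (U (r n) 0) - p (U (r n) 1)\<bar>" using PU[of "r n"] unfolding P_def by blast
        then show ?thesis using c1 by (smt (verit))
      qed
      have "\<exists>N. \<forall>n\<ge>N. \<alpha> - 2 * e n \<le> \<bar>p (C (r n) 0) - p (C (r n) 1)\<bar>" using L3 by blast
      from LIMSEQ_le[OF L1 L2 this] show ?thesis by simp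
    qed
    have B2: "\<alpha> \<le> \<bar>q (w (k-1)) - q (w k)\<bar>"
    proof -
      have L1: "(\<lambda>n. \<alpha> - 2 * e n) \<longlonglongrightarrow> \<alpha> - 2 * 0" by (intro tendsto_intros e0)
      have L2: "(\<lambda>n. \<bar>q (C (r n) (k-1)) - q (C (r n) k)\<bar>) \<longlonglongrightarrow> \<bar>q (w (k-1)) - q (w k)\<bar>"
        by (intro tendsto_intros pl) auto
      have L3: "\<alpha> - 2 * e n \<le> \<bar>q (C (r n) (k-1)) - q (C (r n) k)\<bar>" for n
      proof -
        have c1: "\<bar>q (C (r n) (k-1)) - q (U (r n) (k-1))\<bar> \<le> e n" "\<bar>q (C (r n) k) - q (U (r n) k)\<bar> \<le> e n"
          using CK[of "k-1" "r n"] CK[of k "r n"] unfolding e_def by auto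
        have "\<alpha> \<le> \<bar>q (U (r n) (k-1)) - q (U (r n) k)\<bar>" using PU[of "r n"] unfolding P_def by blast
        then show ?thesis using c1 by (smt (verit))
      qed
      have "\<exists>N. \<forall>n\<ge>N. \<alpha> - 2 * e n \<le> \<bar>q (C (r n) (k-1)) - q (C (r n) k)\<bar>" using L3 by blast
      from LIMSEQ_le[OF L1 L2 this] show ?thesis by simp
    qed
    have s1: "p (w 0) \<noteq> p (w 1)" using B1 \<alpha> by auto
    have s2: "q (w 0) = q (w 1)" using A[of 0] k1 s1 by simp
    have s3: "q (w (k-1)) \<noteq> q (w k)" using B2 \<alpha> by auto
    have "Suc (k-1) = k" using k1 by simp
    then have s4: "p (w (k-1)) = p (w k)" using A[of "k-1"] k1 s3 by (metis diff_less zero_less_one less_le_trans)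
    obtain a b c where abc: "a \<in> w ` {..k}" "b \<in> w ` {..k}" "c \<in> w ` {..k}" "array3 a b c"
    proof -
      have "\<forall>i<k. p (w i) = p (w (Suc i)) \<or> q (w i) = q (w (Suc i))" using A by blast
      from comb[OF this k1 s2 s1 s4 s3] show ?thesis using that by blast
    qed
    have "w ` {..k} \<subseteq> K" using rw(2) by auto
    then show False using abc assms(2) by blast
  qed
qed

end
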